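(* Let $\mathbb{F}$ be a field of characteristic zero, let $J\ge 0$ be an integer, and let $r,\ell$ be integers with $r\ge 2$ and $1\le \ell\le r$. Then for every odd integer $k\ge 2J+1$, $$\mathrm{HP}^{k}_{\ell}=\sum_{j=1}^{\ell-1} q^{(k+1)j-1}\,\mathrm{HP}^{k+2}_{r-j+1}+\sum_{j=1}^{\ell} q^{(k+1)(j-1)}\,\mathrm{HP}^{k+2}_{r-j+1}.$$
   Context: For $k\ge1$ let $S_k=\mathbb{F}[x_k,x_{k+1},x_{k+2},\ldots]$, graded by weight: the monomial $x_{i_1}^{\alpha_1}\cdots x_{i_m}^{\alpha_m}$ has weight $\sum_t i_t\alpha_t$. Fix $r\ge2$. For $k\ge1$, let $L_k$ be the ideal of $S_k$ generated by the monomials $x_{2a-1}^2$ ($2a-1\ge k$), $x_{2b-1}x_{2b}^{r-1}$ ($2b-1\ge k$), $x_{2c}^{r-n_1}x_{2c+2}^{n_1}$ ($2c\ge k$, $0\le n_1\le r-1$), and $x_{2c}^{r-n_2-1}x_{2c+1}x_{2c+2}^{n_2}$ ($2c\ge k$, $0\le n_2\le r-2$), where $a,b,c$ range over integers. For $1\le \ell\le r$ define the ideal $L_k^{\ell}$ of $S_k$ as follows: if $k$ is even, $L_k^\ell$ is generated by $x_k^{\ell}$, the monomials $x_k^{\ell-t}x_{k+2}^{r-\ell+t}$ and $x_k^{\ell-t}x_{k+1}x_{k+2}^{r-\ell+t-1}$ for $t=1,\ldots,\ell-1$, and the generators of $L_{k+1}$; if $k$ is odd, $L_k^\ell$ is generated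 by $x_k^2$, $x_kx_{k+1}^{\ell-1}$, and the generators of $L_{k+1}^{\ell}$. These are homogeneous ideals. For a graded algebra $A=\bigoplus_{j\ge0}A_j$ with finite-dimensional components, its Hilbert–Poincaré series is $\sum_{j\ge0}\dim_{\mathbb{F}}(A_j)q^j$. Write $\mathrm{HP}^k_\ell$ for the Hilbert–Poincaré series of $S_k/L_k^\ell$ (a formal power series in $q$). *)

theory Defs
  imports Complex_Main "HOL-Computational_Algebra.Formal_Power_Series"
begin

text \<open>Monomials in the variables x_1, x_2, ... are exponent vectors m :: nat \<Rightarrow> nat
  (m i = exponent of x_i) with finite support.\<close>

definition monomial_in :: "nat \<Rightarrow> (nat \<Rightarrow> nat) \<Rightarrow> bool" where
  "monomial_in k m \<longleftrightarrow> finite {i. m i \<noteq> 0} \<and> (\<forall>i. m i \<noteq> 0 \<longrightarrow> k \<le> i)"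

definition weight :: "(nat \<Rightarrow> nat) \<Rightarrow> nat" where
  "weight m = (\<Sum>i\<in>{i. m i \<noteq> 0}. i * m i)"

definition mono1 :: "nat \<Rightarrow> nat \<Rightarrow> nat \<Rightarrow> nat" where
  "mono1 i a = (\<lambda>v. if v = i then a else 0)"

definition mono2 :: "nat \<Rightarrow> nat \<Rightarrow> nat \<Rightarrow> nat \<Rightarrow> nat \<Rightarrow> nat" where
  "mono2 i a j b = (\<lambda>v. mono1 i a v + mono1 j b v)"

definition mono3 :: "nat \<Rightarrow> nat \<Rightarrow> nat \<Rightarrow> nat \<Rightarrow> nat \<Rightarrow> nat \<Rightarrow> nat \<Rightarrow> nat" where
  "mono3 i a j b l c = (\<lambda>v. mono1 i a v + mono1 j b v + mono1 l c v)"

definition L_gens :: "nat \<Rightarrow> nat \<Rightarrow> (nat \<Rightarrow> nat) set" where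
  "L_gens r k =
     {mono1 i 2 | i. odd i \<and> k \<le> i}
   \<union> {mono2 i 1 (i + 1) (r - 1) | i. odd i \<and> k \<le> i}
   \<union> {mono2 i (r - n) (i + 2) n | i n. even i \<and> k \<le> i \<and> n \<le> r - 1}
   \<union> {mono3 i (r - n - 1) (i + 1) 1 (i + 2) n | i n. even i \<and> k \<le> i \<and> n \<le> r - 2}"

definition Lell_gens_even :: "nat \<Rightarrow> nat \<Rightarrow> nat \<Rightarrow> (nat \<Rightarrow> nat) set" where
  "Lell_gens_even r l k =
     {mono1 k l}
   \<union> {mono2 k (l - t) (k + 2) (r - l + t) | t. 1 \<le> t \<and> t \<le> l - 1}
   \<union> {mono3 k (l - t) (k + 1) 1 (k + 2) (r - l + t - 1) | t. 1 \<le> t \<and> t \<le> l - 1}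
   \<union> L_gens r (k + 1)"

definition Lell_gens :: "nat \<Rightarrow> nat \<Rightarrow> nat \<Rightarrow> (nat \<Rightarrow> nat) set" where
  "Lell_gens r l k =
     (if even k then Lell_gens_even r l k
      else {mono1 k 2, mono2 k 1 (k + 1) (l - 1)} \<union> Lell_gens_even r l (k + 1))"

definition in_mono_ideal :: "(nat \<Rightarrow> nat) set \<Rightarrow> (nat \<Rightarrow> nat) \<Rightarrow> bool" where
  "in_mono_ideal G m \<longleftrightarrow> (\<exists>g\<in>G. \<forall>i. g i \<le> m i)"

text \<open>Hilbert--Poincare series of S_k / L_k^l over the field 'a: the dimension of the
  weight-j component of a quotient by a monomial ideal is the number of monomials of
  weight j (in S_k) not lying in the ideal.\<close>
definition HP :: "nat \<Rightarrow> nat \<Rightarrow> nat \<Rightarrow> 'a::field fps" where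
  "HP r l k = Abs_fps (\<lambda>j. of_nat (card {m. monomial_in k m \<and> weight m = j
                                   \<and> \<not> in_mono_ideal (Lell_gens r l k) m}))"

end

theory Submission
  imports Defs
begin

unbundle fps_syntax


lemma in_mono_ideal_Un: "in_mono_ideal (A \<union> B) m \<longleftrightarrow> in_mono_ideal A m \<or> in_mono_ideal B m"
  unfolding in_mono_ideal_def by blast

lemma dvd1: "(\<forall>v. mono1 i a v \<le> m v) \<longleftrightarrow> a \<le> m i"
  unfolding mono1_def by (metis le0 order_refl)

lemma dvd2: "i \<noteq> j \<Longrightarrow> (\<forall>v. mono2 i a j b v \<le> m v) \<longleftrightarrow> a \<le> m i \<and> b \<le> m j"
  unfolding mono2_def mono1_def
  apply (rule iffI)
   apply (metis add.right_neutral add_0)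
  by auto

lemma dvd3: "i \<noteq> j \<Longrightarrow> i \<noteq> l \<Longrightarrow> j \<noteq> l \<Longrightarrow>
   (\<forall>v. mono3 i a j b l c v \<le> m v) \<longleftrightarrow> a \<le> m i \<and> b \<le> m j \<and> c \<le> m l"
  unfolding mono3_def mono1_def
  apply (rule iffI)
   apply (metis add.right_neutral add_0)
  by auto

definition BL :: "nat \<Rightarrow> nat \<Rightarrow> (nat \<Rightarrow> nat) \<Rightarrow> bool" where
  "BL r k m = in_mono_ideal (L_gens r k) m"

lemma imi1: "in_mono_ideal {mono1 i 2 | i. odd i \<and> k \<le> i} m \<longleftrightarrow> (\<exists>i. odd i \<and> k \<le> i \<and> 2 \<le> m i)"
  unfolding in_mono_ideal_def using dvd1 by blast
lemma imi2: "in_mono_ideal {mono2 i 1 (i + 1) (r - 1) | i. odd i \<and> k \<le> i} m \<longleftrightarrow>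
   (\<exists>i. odd i \<and> k \<le> i \<and> 1 \<le> m i \<and> r - 1 \<le> m (i+1))"
proof -
  have "\<And>i. (\<forall>v. mono2 i 1 (i + 1) (r - 1) v \<le> m v) \<longleftrightarrow> 1 \<le> m i \<and> r - 1 \<le> m (i+1)"
    by (rule dvd2) simp
  then show ?thesis unfolding in_mono_ideal_def by blast
qed
lemma imi3: "in_mono_ideal {mono2 i (r - n) (i + 2) n | i n. even i \<and> k \<le> i \<and> n \<le> r - 1} m \<longleftrightarrow>
   (\<exists>i n. even i \<and> k \<le> i \<and> n \<le> r - 1 \<and> r - n \<le> m i \<and> n \<le> m (i+2))"
proof -
  have "\<And>i n. (\<forall>v. mono2 i (r - n) (i + 2) n v \<le> m v) \<longleftrightarrow> r - n \<le> m i \<and> n \<le> m (i+2)"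
    by (rule dvd2) simp
  then show ?thesis unfolding in_mono_ideal_def by blast
qed
lemma imi4: "in_mono_ideal {mono3 i (r - n - 1) (i + 1) 1 (i + 2) n | i n. even i \<and> k \<le> i \<and> n \<le> r - 2} m \<longleftrightarrow>
   (\<exists>i n. even i \<and> k \<le> i \<and> n \<le> r - 2 \<and> r - n - 1 \<le> m i \<and> 1 \<le> m (i+1) \<and> n \<le> m (i+2))"
proof -
  have "\<And>i n. (\<forall>v. mono3 i (r - n - 1) (i + 1) 1 (i + 2) n v \<le> m v) \<longleftrightarrow> r - n - 1 \<le> m i \<and> 1 \<le> m (i+1) \<and> n \<le> m (i+2)"
    by (rule dvd3) simp_all
  then show ?thesis unfolding in_mono_ideal_def by blast
qed

lemma L_gens_char: "in_mono_ideal (L_gens r k) m \<longleftrightarrow>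
   (\<exists>i. odd i \<and> k \<le> i \<and> 2 \<le> m i) \<or>
   (\<exists>i. odd i \<and> k \<le> i \<and> 1 \<le> m i \<and> r - 1 \<le> m (i+1)) \<or>
   (\<exists>i n. even i \<and> k \<le> i \<and> n \<le> r - 1 \<and> r - n \<le> m i \<and> n \<le> m (i+2)) \<or>
   (\<exists>i n. even i \<and> k \<le> i \<and> n \<le> r - 2 \<and> r - n - 1 \<le> m i \<and> 1 \<le> m (i+1) \<and> n \<le> m (i+2))"
  unfolding L_gens_def in_mono_ideal_Un imi1 imi2 imi3 imi4 by blast


lemma BL_local: assumes h: "\<And>i. k \<le> i \<Longrightarrow> m i = m' i" shows "BL r k m = BL r k m'"
  unfolding BL_def L_gens_char using h by (auto simp: BL_def L_gens_char)

lemma le_split: "(k::nat) \<le> i \<longleftrightarrow> i = k \<or> Suc k \<le> i" by auto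

lemma BL_odd: assumes "odd k" shows "BL r k m \<longleftrightarrow> 2 \<le> m k \<or> (1 \<le> m k \<and> r - 1 \<le> m (k+1)) \<or> BL r (k+1) m"
  unfolding BL_def L_gens_char using assms by (auto simp: le_split[of k])

lemma BL_even: assumes "even k" shows "BL r k m \<longleftrightarrow>
   (\<exists>n. n \<le> r - 1 \<and> r - n \<le> m k \<and> n \<le> m (k+2)) \<or>
   (\<exists>n. n \<le> r - 2 \<and> r - n - 1 \<le> m k \<and> 1 \<le> m (k+1) \<and> n \<le> m (k+2)) \<or> BL r (k+1) m"
  unfolding BL_def L_gens_char using assms by (auto simp: le_split[of k])

lemma Lell_odd: assumes "odd k" shows "in_mono_ideal (Lell_gens r l k) m \<longleftrightarrow>
   2 \<le> m k \<or> (1 \<le> m k \<and> l - 1 \<le> m (k+1)) \<or> in_mono_ideal (Lell_gens_even r l (k+1)) m"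
proof -
  have e1: "in_mono_ideal {mono1 k 2, mono2 k 1 (k + 1) (l - 1)} m \<longleftrightarrow> 2 \<le> m k \<or> (1 \<le> m k \<and> l - 1 \<le> m (k+1))"
    unfolding in_mono_ideal_def using dvd1[of k 2 m] dvd2[of k "k+1" 1 "l-1" m] by auto
  have e2: "Lell_gens r l k = {mono1 k 2, mono2 k 1 (k + 1) (l - 1)} \<union> Lell_gens_even r l (k+1)"
    using assms by (simp add: Lell_gens_def)
  show ?thesis by (simp only: e2 in_mono_ideal_Un e1 disj_assoc)
qed

lemma Lell_even: "in_mono_ideal (Lell_gens_even r l k) m \<longleftrightarrow> l \<le> m k \<or>
   (\<exists>t. 1 \<le> t \<and> t \<le> l - 1 \<and> l - t \<le> m k \<and> r - l + t \<le> m (k+2)) \<or>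
   (\<exists>t. 1 \<le> t \<and> t \<le> l - 1 \<and> l - t \<le> m k \<and> 1 \<le> m (k+1) \<and> r - l + t - 1 \<le> m (k+2)) \<or>
   BL r (k+1) m"
proof -
  have a: "in_mono_ideal {mono1 k l} m \<longleftrightarrow> l \<le> m k"
    unfolding in_mono_ideal_def using dvd1[of k l m] by auto
  have "\<And>t. (\<forall>v. mono2 k (l - t) (k + 2) (r - l + t) v \<le> m v) \<longleftrightarrow> l - t \<le> m k \<and> r - l + t \<le> m (k+2)"
    by (rule dvd2) simp
  then have b: "in_mono_ideal {mono2 k (l - t) (k + 2) (r - l + t) | t. 1 \<le> t \<and> t \<le> l - 1} m \<longleftrightarrow>
     (\<exists>t. 1 \<le> t \<and> t \<le> l - 1 \<and> l - t \<le> m k \<and> r - l + t \<le> m (k+2))"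
    unfolding in_mono_ideal_def by blast
  have "\<And>t. (\<forall>v. mono3 k (l - t) (k + 1) 1 (k + 2) (r - l + t - 1) v \<le> m v) \<longleftrightarrow> l - t \<le> m k \<and> 1 \<le> m (k+1) \<and> r - l + t - 1 \<le> m (k+2)"
    by (rule dvd3) simp_all
  then have c: "in_mono_ideal {mono3 k (l - t) (k + 1) 1 (k + 2) (r - l + t - 1) | t. 1 \<le> t \<and> t \<le> l - 1} m \<longleftrightarrow>
     (\<exists>t. 1 \<le> t \<and> t \<le> l - 1 \<and> l - t \<le> m k \<and> 1 \<le> m (k+1) \<and> r - l + t - 1 \<le> m (k+2))"
    unfolding in_mono_ideal_def by blast
  show ?thesis unfolding Lell_gens_even_def in_mono_ideal_Un a b c BL_def by blast
qed


lemma E1: "(l::nat) \<le> r \<Longrightarrow> (\<exists>t. 1 \<le> t \<and> t \<le> l - 1 \<and> l - t \<le> x \<and> r - l + t \<le> y) \<longleftrightarrow>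
   2 \<le> l \<and> 1 \<le> x \<and> r - l + 1 \<le> y \<and> r \<le> x + y"
  apply (rule iffI) apply (erule exE; arith) apply (rule exI[of _ "max 1 (l - x)"]; arith) done
lemma E2a: "(l::nat) \<le> r \<Longrightarrow> (\<exists>t. 1 \<le> t \<and> t \<le> l - 1 \<and> l - t \<le> x \<and> r - l + t - 1 \<le> y) \<longleftrightarrow>
   2 \<le> l \<and> 1 \<le> x \<and> r - l \<le> y \<and> r \<le> x + y + 1"
  apply (rule iffI) apply (erule exE; arith) apply (rule exI[of _ "max 1 (l - x)"]; arith) done
lemma N1: "2 \<le> (r::nat) \<Longrightarrow> (\<exists>n. n \<le> r - 1 \<and> r - n \<le> x \<and> n \<le> y) \<longleftrightarrow> 1 \<le> x \<and> r \<le> x + y"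
  apply (rule iffI) apply (erule exE; arith) apply (rule exI[of _ "r - min x r"]; arith) done
lemma N2a: "2 \<le> (r::nat) \<Longrightarrow> (\<exists>n. n \<le> r - 2 \<and> r - n - 1 \<le> x \<and> n \<le> y) \<longleftrightarrow> 1 \<le> x \<and> r \<le> x + y + 1"
  apply (rule iffI) apply (erule exE; arith) apply (rule exI[of _ "r - 1 - min x (r - 1)"]; arith) done
lemma E2: "(l::nat) \<le> r \<Longrightarrow> (\<exists>t. 1 \<le> t \<and> t \<le> l - 1 \<and> l - t \<le> x \<and> 1 \<le> z \<and> r - l + t - 1 \<le> y) \<longleftrightarrow>
   2 \<le> l \<and> 1 \<le> x \<and> 1 \<le> z \<and> r - l \<le> y \<and> r \<le> x + y + 1"
  using E2a[of l r x y] by blast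
lemma N2: "2 \<le> (r::nat) \<Longrightarrow> (\<exists>n. n \<le> r - 2 \<and> r - n - 1 \<le> x \<and> 1 \<le> z \<and> n \<le> y) \<longleftrightarrow> 1 \<le> x \<and> 1 \<le> z \<and> r \<le> x + y + 1"
  using N2a[of r x y] by blast

lemma propAll:
  assumes "C \<longleftrightarrow> \<not> (A1 \<or> A2 \<or> A3)"
    "C \<Longrightarrow> L4 \<Longrightarrow> R3" "C \<Longrightarrow> L5 \<Longrightarrow> R2" "C \<Longrightarrow> L7 \<Longrightarrow> R2" "C \<Longrightarrow> L8 \<Longrightarrow> R3 \<or> R4"
    "C \<Longrightarrow> L9 \<Longrightarrow> R3 \<or> R5" "C \<Longrightarrow> R2 \<Longrightarrow> L7 \<or> L5" "C \<Longrightarrow> R3 \<Longrightarrow> L8 \<or> L4"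
    "C \<Longrightarrow> R4 \<Longrightarrow> L8" "C \<Longrightarrow> R5 \<Longrightarrow> L9"
  shows "(\<not> (A1 \<or> A2 \<or> A3 \<or> L4 \<or> L5 \<or> R1 \<or> L7 \<or> L8 \<or> L9 \<or> B)) = (C \<and> \<not> (R1 \<or> R2 \<or> R3 \<or> R4 \<or> R5 \<or> B))"
  using assms by blast

lemma core:
  fixes e a x2 x3 x4 x5 r l :: nat
  assumes r: "2 \<le> r" and l: "1 \<le> l" "l \<le> r"
  shows "(\<not> (2 \<le> e \<or> 1 \<le> e \<and> l - 1 \<le> a \<or> l \<le> a \<or>
         2 \<le> l \<and> 1 \<le> a \<and> r - l + 1 \<le> x3 \<and> r \<le> a + x3 \<or>
         2 \<le> l \<and> 1 \<le> a \<and> 1 \<le> x2 \<and> r - l \<le> x3 \<and> r \<le> a + x3 + 1 \<or>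
         2 \<le> x2 \<or> 1 \<le> x2 \<and> r - 1 \<le> x3 \<or>
         1 \<le> x3 \<and> r \<le> x3 + x5 \<or>
         1 \<le> x3 \<and> 1 \<le> x4 \<and> r \<le> x3 + x5 + 1 \<or> B)) =
     ((e = 0 \<and> a < l \<or> e = 1 \<and> a + 2 \<le> l) \<and>
      \<not> (2 \<le> x2 \<or> 1 \<le> x2 \<and> r - a - 1 \<le> x3 \<or> r - a \<le> x3 \<or>
         2 \<le> r - a \<and> 1 \<le> x3 \<and> r - (r - a) + 1 \<le> x5 \<and> r \<le> x3 + x5 \<or>
         2 \<le> r - a \<and> 1 \<le> x3 \<and> 1 \<le> x4 \<and> r - (r - a) \<le> x5 \<and> r \<le> x3 + x5 + 1 \<or> B))"
  apply (rule propAll)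
  using r l by presburger+

lemma char:
  fixes m :: "nat \<Rightarrow> nat"
  assumes r: "2 \<le> r" and l: "1 \<le> l" "l \<le> r" and k: "odd k"
  defines "m' \<equiv> m(k := 0, k + 1 := 0)"
  shows "\<not> in_mono_ideal (Lell_gens r l k) m \<longleftrightarrow>
    ((m k = 0 \<and> m (k+1) < l) \<or> (m k = 1 \<and> m (k+1) + 2 \<le> l)) \<and>
    \<not> in_mono_ideal (Lell_gens r (r - m (k+1)) (k+2)) m'"
proof -
  have k1: "even (k+1)" "odd (k+2)" "even (k+3)" using k by auto
  have B4: "BL r (k+4) m' = BL r (k+4) m" unfolding m'_def by (rule BL_local) auto
  have mv: "m' (k+2) = m (k+2)" "m' (k+3) = m (k+3)" "m' (k+4) = m (k+4)" "m' (k+5) = m (k+5)"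
    unfolding m'_def by auto
  have lr: "r - m (k+1) \<le> r" by simp
  have LHS: "in_mono_ideal (Lell_gens r l k) m \<longleftrightarrow>
     2 \<le> m k \<or> (1 \<le> m k \<and> l - 1 \<le> m (k+1)) \<or> l \<le> m (k+1) \<or>
     (2 \<le> l \<and> 1 \<le> m (k+1) \<and> r - l + 1 \<le> m (k+3) \<and> r \<le> m (k+1) + m (k+3)) \<or>
     (2 \<le> l \<and> 1 \<le> m (k+1) \<and> 1 \<le> m (k+2) \<and> r - l \<le> m (k+3) \<and> r \<le> m (k+1) + m (k+3) + 1) \<or>
     2 \<le> m (k+2) \<or> (1 \<le> m (k+2) \<and> r - 1 \<le> m (k+3)) \<or>
     (1 \<le> m (k+3) \<and> r \<le> m (k+3) + m (k+5)) \<or>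
     (1 \<le> m (k+3) \<and> 1 \<le> m (k+4) \<and> r \<le> m (k+3) + m (k+5) + 1) \<or> BL r (k+4) m"
    using Lell_odd[OF k, of r l m] Lell_even[of r l "k+1" m] BL_odd[OF k1(2), of r m]
      BL_even[OF k1(3), of r m] E1[OF l(2), of "m (k+1)" "m (k+3)"]
      E2[OF l(2), of "m (k+1)" "m (k+2)" "m (k+3)"]
      N1[OF r, of "m (k+3)" "m (k+5)"] N2[OF r, of "m (k+3)" "m (k+4)" "m (k+5)"]
    by (simp add: numeral_eq_Suc add_Suc_right)
  have RHS: "in_mono_ideal (Lell_gens r (r - m (k+1)) (k+2)) m' \<longleftrightarrow>
     2 \<le> m (k+2) \<or> (1 \<le> m (k+2) \<and> r - m (k+1) - 1 \<le> m (k+3)) \<or> r - m (k+1) \<le> m (k+3) \<or>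
     (2 \<le> r - m (k+1) \<and> 1 \<le> m (k+3) \<and> r - (r - m (k+1)) + 1 \<le> m (k+5) \<and> r \<le> m (k+3) + m (k+5)) \<or>
     (2 \<le> r - m (k+1) \<and> 1 \<le> m (k+3) \<and> 1 \<le> m (k+4) \<and> r - (r - m (k+1)) \<le> m (k+5) \<and> r \<le> m (k+3) + m (k+5) + 1) \<or>
     BL r (k+4) m"
    using Lell_odd[OF k1(2), of r "r - m (k+1)" m'] Lell_even[of r "r - m (k+1)" "k+3" m']
      E1[OF lr, of "m (k+3)" "m (k+5)"]
      E2[OF lr, of "m (k+3)" "m (k+4)" "m (k+5)"]
      mv B4
    by (simp add: numeral_eq_Suc add_Suc_right)
  show ?thesis unfolding LHS RHS by (rule core[OF r l])
qed




lemma mon_fin: "monomial_in k m \<Longrightarrow> finite {i. m i \<noteq> 0}"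
  unfolding monomial_in_def by simp

lemma weight_superset: "finite S \<Longrightarrow> {i. m i \<noteq> 0} \<subseteq> S \<Longrightarrow> weight m = (\<Sum>i\<in>S. i * m i)"
  unfolding weight_def by (rule sum.mono_neutral_left) auto

lemma weight_upd2:
  assumes fin: "finite {v. m v \<noteq> 0}" and ij: "i \<noteq> j"
  shows "weight (m(i := c, j := d)) = weight (m(i := 0, j := 0)) + i * c + j * d"
proof -
  let ?S = "{v. m v \<noteq> 0} \<union> {i, j}"
  have f: "finite ?S" using fin by simp
  have w1: "weight (m(i := c, j := d)) = (\<Sum>v\<in>?S. v * (m(i := c, j := d)) v)"
    by (rule weight_superset[OF f]) auto
  have w2: "weight (m(i := 0, j := 0)) = (\<Sum>v\<in>?S. v * (m(i := 0, j := 0)) v)"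
    by (rule weight_superset[OF f]) auto
  have s1: "(\<Sum>v\<in>?S. v * (m(i := c, j := d)) v) = i * c + j * d + (\<Sum>v\<in>?S - {i, j}. v * m v)"
  proof -
    have a1: "(\<Sum>v\<in>?S. v * (m(i := c, j := d)) v) = (\<Sum>v\<in>?S - {i, j}. v * (m(i := c, j := d)) v) + (\<Sum>v\<in>{i,j}. v * (m(i := c, j := d)) v)"
      by (rule sum.subset_diff) (use f in auto)
    have a2: "(\<Sum>v\<in>?S - {i, j}. v * (m(i := c, j := d)) v) = (\<Sum>v\<in>?S - {i, j}. v * m v)"
      by (rule sum.cong) auto
    have a3: "(\<Sum>v\<in>{i,j}. v * (m(i := c, j := d)) v) = i * c + j * d"
      using ij by simp
    show ?thesis unfolding a1 a2 a3 by simp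
  qed
  have s2: "(\<Sum>v\<in>?S. v * (m(i := 0, j := 0)) v) = (\<Sum>v\<in>?S - {i, j}. v * m v)"
  proof -
    have a1: "(\<Sum>v\<in>?S. v * (m(i := 0, j := 0)) v) = (\<Sum>v\<in>?S - {i, j}. v * (m(i := 0, j := 0)) v) + (\<Sum>v\<in>{i,j}. v * (m(i := 0, j := 0)) v)"
      by (rule sum.subset_diff) (use f in auto)
    have a2: "(\<Sum>v\<in>?S - {i, j}. v * (m(i := 0, j := 0)) v) = (\<Sum>v\<in>?S - {i, j}. v * m v)"
      by (rule sum.cong) auto
    have a3: "(\<Sum>v\<in>{i,j}. v * (m(i := 0, j := 0)) v) = 0"
      using ij by simp
    show ?thesis unfolding a1 a2 a3 by simp
  qed
  show ?thesis using w1 w2 s1 s2 by simp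
qed

lemma finite_mon: assumes "1 \<le> k" shows "finite {m. monomial_in k m \<and> weight m = n}"
proof (rule finite_subset)
  show "finite {f. \<forall>x. (x \<in> {..n} \<longrightarrow> f x \<in> {..n}) \<and> (x \<notin> {..n} \<longrightarrow> f x = (0::nat))}"
    by (rule finite_set_of_finite_funs) auto
  show "{m. monomial_in k m \<and> weight m = n} \<subseteq> {f. \<forall>x. (x \<in> {..n} \<longrightarrow> f x \<in> {..n}) \<and> (x \<notin> {..n} \<longrightarrow> f x = (0::nat))}"
  proof
    fix m assume "m \<in> {m. monomial_in k m \<and> weight m = n}"
    then have mi: "monomial_in k m" and w: "weight m = n" by auto
    have le: "i * m i \<le> n" if "m i \<noteq> 0" for i
    proof -
      have "i * m i \<le> (\<Sum>v\<in>{v. m v \<noteq> 0}. v * m v)"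
        by (rule member_le_sum) (use that mon_fin[OF mi] in auto)
      then show ?thesis using w unfolding weight_def by simp
    qed
    have ge: "1 \<le> i" if "m i \<noteq> 0" for i
    proof -
      have "k \<le> i" using mi that unfolding monomial_in_def by blast
      then show ?thesis using assms by linarith
    qed
    show "m \<in> {f. \<forall>x. (x \<in> {..n} \<longrightarrow> f x \<in> {..n}) \<and> (x \<notin> {..n} \<longrightarrow> f x = (0::nat))}"
    proof (intro CollectI allI)
    fix x
    show "(x \<in> {..n} \<longrightarrow> m x \<in> {..n}) \<and> (x \<notin> {..n} \<longrightarrow> m x = 0)"
    proof (cases "m x = 0")
      case False
      have "x * m x \<le> n" using le False .
      moreover have "1 \<le> x" using ge False .
      have m1: "1 \<le> m x" using False by simp
      have "1 * m x \<le> x * m x" by (rule mult_le_mono1) fact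
      then have t1: "m x \<le> x * m x" by (simp only: mult_1)
      have "x * 1 \<le> x * m x" by (rule mult_le_mono2) fact
      then have t2: "x \<le> x * m x" by (simp only: mult_1_right)
      have "m x \<le> n" using t1 \<open>x * m x \<le> n\<close> by linarith
      have "x \<le> n" using t2 \<open>x * m x \<le> n\<close> by linarith
      then show ?thesis using \<open>m x \<le> n\<close> by auto
    qed auto
    qed
  qed
qed

lemma fiber:
  assumes k: "1 \<le> k"
  shows "card {m. monomial_in k m \<and> weight m = n \<and> m k = e \<and> m (k+1) = a \<and> Q (m(k := 0, k+1 := 0))} =
    (if n < e * k + a * (k+1) then 0 else card {m. monomial_in (k+2) m \<and> weight m = n - (e * k + a * (k+1)) \<and> Q m})"
proof -
  let ?w = "e * k + a * (k+1)"
  let ?F = "{m. monomial_in k m \<and> weight m = n \<and> m k = e \<and> m (k+1) = a \<and> Q (m(k := 0, k+1 := 0))}"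
  let ?f = "\<lambda>m'::nat\<Rightarrow>nat. m'(k := e, k+1 := a)"
  have wm: "weight m = weight (m(k := 0, k+1 := 0)) + ?w" if "m \<in> ?F" for m
  proof -
    have "m = m(k := e, k+1 := a)" using that by auto
    then have "weight m = weight (m(k := e, k+1 := a))" by simp
    also have "\<dots> = weight (m(k := 0, k+1 := 0)) + k * e + (k+1) * a"
      by (rule weight_upd2) (use that mon_fin in auto)
    finally show ?thesis by simp
  qed
  show ?thesis
  proof (cases "n < ?w")
    case True
    have "?F = {}" using wm True by fastforce
    then have "card ?F = 0" by (simp only: card.empty)
    then show ?thesis using True by simp
  next
    case False
    let ?B = "{m. monomial_in (k+2) m \<and> weight m = n - ?w \<and> Q m}"
    have B0: "m' k = 0" "m' (k+1) = 0" if "m' \<in> ?B" for m'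
      using that unfolding monomial_in_def by force+
    have "?F = ?f ` ?B"
    proof
      show "?F \<subseteq> ?f ` ?B"
      proof
        fix m assume mF: "m \<in> ?F"
        have "m = ?f (m(k := 0, k+1 := 0))" using mF by auto
        moreover have "m(k := 0, k+1 := 0) \<in> ?B"
        proof -
          have mk: "monomial_in k m" using mF by simp
          have "finite {i. (m(k := 0, k+1 := 0)) i \<noteq> 0}"
            by (rule finite_subset[OF _ mon_fin[OF mk]]) auto
          moreover have "k + 2 \<le> i" if "(m(k := 0, k+1 := 0)) i \<noteq> 0" for i
          proof -
            have "i \<noteq> k" "i \<noteq> k + 1" "m i \<noteq> 0" using that by (auto split: if_splits)
            then have "k \<le> i" using mk unfolding monomial_in_def by blast
            then show ?thesis using \<open>i \<noteq> k\<close> \<open>i \<noteq> k + 1\<close> by linarith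
          qed
          ultimately have "monomial_in (k+2) (m(k := 0, k+1 := 0))" unfolding monomial_in_def by blast
          moreover have "weight (m(k := 0, k+1 := 0)) = n - ?w"
          proof -
            have "weight m = n" using mF by simp
            then show ?thesis using wm[OF mF] by arith
          qed
          moreover have "Q (m(k := 0, k+1 := 0))" using mF by simp
          ultimately show ?thesis by simp
        qed
        ultimately show "m \<in> ?f ` ?B" by blast
      qed
    next
      show "?f ` ?B \<subseteq> ?F"
      proof
        fix m assume "m \<in> ?f ` ?B"
        then obtain m' where m': "m' \<in> ?B" and m: "m = ?f m'" by blast
        have r: "m(k := 0, k+1 := 0) = m'" using B0[OF m'] m by (auto simp: fun_eq_iff)
        have "weight (m'(k := e, k+1 := a)) = weight (m'(k := 0, k+1 := 0)) + k * e + (k+1) * a"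
          by (rule weight_upd2) (use m' mon_fin in auto)
        moreover have "m'(k := 0, k+1 := 0) = m'" using B0[OF m'] by (auto simp: fun_eq_iff)
        ultimately have "weight m = weight m' + k * e + (k+1) * a" using m by simp
        then have "weight m = n" using m' False by simp
        moreover have "monomial_in k m" unfolding monomial_in_def
        proof
          show "finite {i. m i \<noteq> 0}"
            by (rule finite_subset[of _ "{i. m' i \<noteq> 0} \<union> {k, k+1}"]) (use m' mon_fin in \<open>auto simp: m\<close>)
          show "\<forall>i. m i \<noteq> 0 \<longrightarrow> k \<le> i"
          proof (intro allI impI)
            fix i assume mi: "m i \<noteq> 0"
            show "k \<le> i"
            proof (cases "i = k \<or> i = k + 1")
              case False
              then have "m' i \<noteq> 0" using mi unfolding m by auto
              then have "k + 2 \<le> i" using m' unfolding monomial_in_def by blast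
              then show ?thesis by simp
            qed auto
          qed
        qed
        ultimately show "m \<in> ?F" using r m' m by simp
      qed
    qed
    moreover have "inj_on ?f ?B"
    proof (rule inj_onI)
      fix x y assume "x \<in> ?B" "y \<in> ?B" "?f x = ?f y"
      note h = this
      have "x = (?f x)(k := 0, k+1 := 0)" using B0[OF h(1)] by (auto simp: fun_eq_iff)
      also have "\<dots> = (?f y)(k := 0, k+1 := 0)" using h(3) by simp
      also have "\<dots> = y" using B0[OF h(2)] by (auto simp: fun_eq_iff)
      finally show "x = y" .
    qed
    ultimately show ?thesis using False by (simp add: card_image)
  qed
qed




theorem lemma2p1:
  fixes J r l k :: nat
  assumes "r \<ge> 2" and "1 \<le> l" and "l \<le> r"
    and "odd k" and "k \<ge> 2 * J + 1"
  shows "(HP r l k :: 'a::field_char_0 fps) =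
           (\<Sum>j=1..l-1. fps_X ^ ((k + 1) * j - 1) * HP r (r - j + 1) (k + 2))
         + (\<Sum>j=1..l. fps_X ^ ((k + 1) * (j - 1)) * HP r (r - j + 1) (k + 2))"
proof -
  have r: "2 \<le> r" and l: "1 \<le> l" "l \<le> r" and k: "odd k" using assms by auto
  have k1: "1 \<le> k" using k by (cases k) auto
  define Q where "Q a m' \<longleftrightarrow> \<not> in_mono_ideal (Lell_gens r (r - a) (k+2)) m'" for a and m' :: "nat \<Rightarrow> nat"
  define cB where "cB ll nn = card {m. monomial_in (k+2) m \<and> weight m = nn \<and> \<not> in_mono_ideal (Lell_gens r ll (k+2)) m}" for ll nn
  have HPB: "HP r ll (k+2) $ nn = (of_nat (cB ll nn) :: 'a)" for ll nn
    unfolding HP_def cB_def by simp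
  show ?thesis
  proof (rule fps_ext)
    fix n
    define F where "F e a = {m. monomial_in k m \<and> weight m = n \<and> m k = e \<and> m (k+1) = a \<and> Q a (m(k := 0, k+1 := 0))}" for e a
    define A where "A = {m. monomial_in k m \<and> weight m = n \<and> \<not> in_mono_ideal (Lell_gens r l k) m}"
    have lhs: "(HP r l k :: 'a fps) $ n = of_nat (card A)" unfolding HP_def A_def by simp
    have Aeq: "A = (\<Union>a\<in>{..<l}. F 0 a) \<union> (\<Union>a\<in>{..<l-1}. F 1 a)"
    proof (rule set_eqI)
      fix m
      show "m \<in> A \<longleftrightarrow> m \<in> (\<Union>a\<in>{..<l}. F 0 a) \<union> (\<Union>a\<in>{..<l-1}. F 1 a)"
        unfolding A_def F_def Q_def using char[OF r l k, of m] by auto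
    qed
    have finF: "finite (F e a)" for e a
      by (rule finite_subset[OF _ finite_mon[OF k1, of n]]) (auto simp: F_def)
    have cardF: "card (F e a) = (if n < e * k + a * (k+1) then 0 else cB (r - a) (n - (e * k + a * (k+1))))" for e a
      unfolding F_def cB_def Q_def by (rule fiber[OF k1])
    have cA: "card A = (\<Sum>a<l. card (F 0 a)) + (\<Sum>a<l-1. card (F 1 a))"
    proof -
      have d1: "card (\<Union>a\<in>{..<l}. F 0 a) = (\<Sum>a<l. card (F 0 a))"
        by (rule card_UN_disjoint) (simp, simp add: finF, auto simp: F_def)
      have d2: "card (\<Union>a\<in>{..<l-1}. F 1 a) = (\<Sum>a<l-1. card (F 1 a))"
        by (rule card_UN_disjoint) (simp, simp add: finF, auto simp: F_def)
      have "card A = card (\<Union>a\<in>{..<l}. F 0 a) + card (\<Union>a\<in>{..<l-1}. F 1 a)"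
        unfolding Aeq by (rule card_Un_disjoint) (simp add: finF, simp add: finF, auto simp: F_def)
      then show ?thesis using d1 d2 by simp
    qed
    have s1: "(\<Sum>j=1..l-1. fps_X ^ ((k + 1) * j - 1) * HP r (r - j + 1) (k + 2)) $ n
        = (of_nat (\<Sum>a<l-1. card (F 1 a)) :: 'a)"
    proof -
      have "(\<Sum>j=1..l-1. fps_X ^ ((k + 1) * j - 1) * (HP r (r - j + 1) (k + 2) :: 'a fps)) $ n
         = (\<Sum>j=Suc 0..l-1. (fps_X ^ ((k + 1) * j - 1) * (HP r (r - j + 1) (k + 2) :: 'a fps)) $ n)"
        by (simp add: fps_sum_nth)
      also have "\<dots> = (\<Sum>a<l-1. (fps_X ^ ((k + 1) * Suc a - 1) * (HP r (r - Suc a + 1) (k + 2) :: 'a fps)) $ n)"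
        by (rule sum.atLeast1_atMost_eq)
      also have "\<dots> = (\<Sum>a<l-1. of_nat (card (F 1 a)))"
      proof (rule sum.cong)
        fix a assume "a \<in> {..<l-1}"
        then have ar: "a < r" using l by auto
        have e1: "(k + 1) * Suc a - 1 = 1 * k + a * (k+1)" by (simp add: algebra_simps)
        have e2: "r - Suc a + 1 = r - a" using ar by simp
        show "(fps_X ^ ((k + 1) * Suc a - 1) * (HP r (r - Suc a + 1) (k + 2) :: 'a fps)) $ n = of_nat (card (F 1 a))"
          unfolding e1 e2 fps_X_power_mult_nth cardF HPB by simp
      qed simp
      finally show ?thesis by simp
    qed
    have s2: "(\<Sum>j=1..l. fps_X ^ ((k + 1) * (j - 1)) * HP r (r - j + 1) (k + 2)) $ n
        = (of_nat (\<Sum>a<l. card (F 0 a)) :: 'a)"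
    proof -
      have "(\<Sum>j=1..l. fps_X ^ ((k + 1) * (j - 1)) * (HP r (r - j + 1) (k + 2) :: 'a fps)) $ n
         = (\<Sum>j=Suc 0..l. (fps_X ^ ((k + 1) * (j - 1)) * (HP r (r - j + 1) (k + 2) :: 'a fps)) $ n)"
        by (simp add: fps_sum_nth)
      also have "\<dots> = (\<Sum>a<l. (fps_X ^ ((k + 1) * (Suc a - 1)) * (HP r (r - Suc a + 1) (k + 2) :: 'a fps)) $ n)"
        by (rule sum.atLeast1_atMost_eq)
      also have "\<dots> = (\<Sum>a<l. of_nat (card (F 0 a)))"
      proof (rule sum.cong)
        fix a assume "a \<in> {..<l}"
        then have ar: "a < r" using l by auto
        have e1: "(k + 1) * (Suc a - 1) = 0 * k + a * (k+1)" by (simp add: algebra_simps)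
        have e2: "r - Suc a + 1 = r - a" using ar by simp
        show "(fps_X ^ ((k + 1) * (Suc a - 1)) * (HP r (r - Suc a + 1) (k + 2) :: 'a fps)) $ n = of_nat (card (F 0 a))"
          unfolding e1 e2 fps_X_power_mult_nth cardF HPB by simp
      qed simp
      finally show ?thesis by simp
    qed
    show "(HP r l k :: 'a fps) $ n = ((\<Sum>j=1..l-1. fps_X ^ ((k + 1) * j - 1) * HP r (r - j + 1) (k + 2))
         + (\<Sum>j=1..l. fps_X ^ ((k + 1) * (j - 1)) * HP r (r - j + 1) (k + 2))) $ n"
      unfolding fps_add_nth s1 s2 lhs cA by simp
  qed
qed


end
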